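(* For $0 < s < 2$ define $T^{-1}(s) = \sqrt{1 - \frac{1}{4}s^2} - s$. Let $s_1^* = \sqrt{\frac{1}{3}(2+\sqrt{2})}$ and define \[\sigma = \sigma(s_1) = \begin{cases} \frac{1}{4}\left(-s_1 - 2T^{-1}(s_1) + \sqrt{8 - (s_1 - 2T^{-1}(s_1))^2}\right), & \text{if } s_1 \leq s_1^*,\\ \frac{1}{5}\left(\sqrt{20 - s_1^2} - 2s_1\right), & \text{otherwise.} \end{cases}\] Let $\ell_1 = \sqrt{1 - T^{-1}(s_1)^2} - \frac{s_1}{2}$. Define $x_{+1} = \frac{s_1}{2} + \frac{\sigma}{2\sqrt{2}}$, $x_{+2} = \frac{s_1}{2} + 0.645\sigma$, \[ y_{+1} = \begin{cases} T^{-1}(s_1) + \sigma + \frac{\sigma}{2\sqrt{2}}, &\text{if } s_1 \leq s_1^*,\\ \frac{\sigma}{2} + \frac{\sigma}{2\sqrt{2}}, &\text{otherwise,} \end{cases}\qquad y_{+2} = \begin{cases} T^{-1}(s_1) + 2 \cdot 0.645\sigma, &\text{if } s_1 \leq s_1^*,\\ -\frac{\sigma}{2} + 2 \cdot 0.645\sigma, &\text{otherwise,} \end{cases}\] and $F_{TP_1}(s_1) = x_{+1}^2 + y_{+1}^2$, $F_{TP_2}(s_1) = x_{+2}^2 + y_{+2}^2$. Then for all $s_1$ with $0.295 \leq s_1 \leq \sqrt{8/5}$ and $\ell_1 \leq s_1$, we have (1) $F_{TP_1}(s_1) \leq 1$ and (2) $F_{TP_2}(s_1) \leq 1$.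
   Context: Geometric meaning (not needed for the statement): $T^{-1}(s)$ is the highest possible $y$-coordinate of the bottom side of an axis-parallel square of side $s$ inside the unit disk centered at the origin; $\sigma(s_1)$ is the side length of the largest square fitting into the region of the disk to the left of such a topmost square of side $s_1$ and above the line through its bottom side; $\ell_1$ is the length of the bottom boundary of that region. *)

theory Defs
  imports Complex_Main
begin

definition Tinv :: "real \<Rightarrow> real" where
  "Tinv s = sqrt (1 - (1/4) * s^2) - s"

definition s1_star :: real where
  "s1_star = sqrt ((1/3) * (2 + sqrt 2))"

definition sigma :: "real \<Rightarrow> real" where
  "sigma s1 = (if s1 \<le> s1_star
     then (1/4) * (- s1 - 2 * Tinv s1 + sqrt (8 - (s1 - 2 * Tinv s1)^2))
     else (1/5) * (sqrt (20 - s1^2) - 2 * s1))"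

definition ell1 :: "real \<Rightarrow> real" where
  "ell1 s1 = sqrt (1 - (Tinv s1)^2) - s1 / 2"

definition xp1 :: "real \<Rightarrow> real" where
  "xp1 s1 = s1 / 2 + sigma s1 / (2 * sqrt 2)"

definition xp2 :: "real \<Rightarrow> real" where
  "xp2 s1 = s1 / 2 + 0.645 * sigma s1"

definition yp1 :: "real \<Rightarrow> real" where
  "yp1 s1 = (if s1 \<le> s1_star
     then Tinv s1 + sigma s1 + sigma s1 / (2 * sqrt 2)
     else sigma s1 / 2 + sigma s1 / (2 * sqrt 2))"

definition yp2 :: "real \<Rightarrow> real" where
  "yp2 s1 = (if s1 \<le> s1_star
     then Tinv s1 + 2 * 0.645 * sigma s1
     else - sigma s1 / 2 + 2 * 0.645 * sigma s1)"

definition F_TP1 :: "real \<Rightarrow> real" where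
  "F_TP1 s1 = (xp1 s1)^2 + (yp1 s1)^2"

definition F_TP2 :: "real \<Rightarrow> real" where
  "F_TP2 s1 = (xp2 s1)^2 + (yp2 s1)^2"

end

theory Submission
  imports Defs
begin

lemma sq_le_max: fixes x l h :: real
  assumes "l \<le> x" "x \<le> h" shows "x^2 \<le> max (l^2) (h^2)"
proof (cases "0 \<le> x")
  case True then have "x^2 \<le> h^2" using power_mono[OF assms(2) True, of 2] by simp
  then show ?thesis by simp
next
  case False
  then have "0 \<le> -x" by simp
  have "(-x)^2 \<le> (-l)^2" using power_mono[OF _ \<open>0 \<le> -x\<close>, of "-l" 2] assms(1) by simp
  then show ?thesis by simp
qed

lemma sqrt_bnd: fixes x l h :: real
  assumes "0 \<le> l" "l^2 \<le> x" "x \<le> h^2" "0 \<le> h"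
  shows "l \<le> sqrt x" "sqrt x \<le> h"
  using assms real_le_rsqrt real_le_lsqrt by auto

lemma sqrt2_bnd: "141421/100000 \<le> sqrt (2::real)" "sqrt (2::real) \<le> 141422/100000"
  by (rule real_le_rsqrt, simp add: power2_eq_square) (rule real_le_lsqrt, simp_all add: power2_eq_square)

lemma r_bnd: "35355/100000 \<le> 1 / (2 * sqrt 2::real)" "1 / (2 * sqrt 2::real) \<le> 35356/100000"
proof -
  have p: "0 < 2 * sqrt (2::real)" by simp
  have "35355/100000 * (2 * sqrt 2) \<le> (1::real)" using sqrt2_bnd by linarith
  then show "35355/100000 \<le> 1 / (2 * sqrt 2::real)" using p by (subst pos_le_divide_eq) auto
  have "1 \<le> 35356/100000 * (2 * sqrt (2::real))" using sqrt2_bnd by linarith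
  then show "1 / (2 * sqrt 2::real) \<le> 35356/100000" using p by (subst pos_divide_le_eq) auto
qed

lemma s1_star_le: "s1_star \<le> 10669/10000"
  unfolding s1_star_def
proof (rule real_le_lsqrt)
  show "1 / 3 * (2 + sqrt 2) \<le> (10669/10000::real)^2" using sqrt2_bnd by (simp add: power2_eq_square)
qed simp

lemma s1_star_ge: "10668/10000 \<le> s1_star"
  unfolding s1_star_def
proof (rule real_le_rsqrt)
  show "(10668/10000::real)^2 \<le> 1 / 3 * (2 + sqrt 2)" using sqrt2_bnd by (simp add: power2_eq_square)
qed

lemma br1:
  fixes s a b lu hu lw hw :: real
  assumes s: "a \<le> s" "s \<le> b" "s \<le> s1_star" "2/5 \<le> s^2" "0 \<le> a"
  and u: "0 \<le> lu" "lu^2 \<le> 1 - b^2/4" "1 - a^2/4 \<le> hu^2" and hu0: "0 \<le> hu"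
  and w: "0 \<le> lw" "lw^2 \<le> 8 - (3*b-2*lu)^2" "8 - (max (3*a-2*hu) 0)^2 \<le> hw^2" "0 \<le> hw"
  and sl: "0 \<le> (a-2*hu+lw)/4"
  and c1: "max ((a/2 + (a-2*hu+lw)/4*(35355/100000))^2) ((b/2 + (b-2*lu+hw)/4*(35356/100000))^2)
         + max ((lu-b + (a-2*hu+lw)/4 + (a-2*hu+lw)/4*(35355/100000))^2) ((hu-a + (b-2*lu+hw)/4 + (b-2*lu+hw)/4*(35356/100000))^2) \<le> 1"
  and c2: "max ((a/2 + (129/200)*((a-2*hu+lw)/4))^2) ((b/2 + (129/200)*((b-2*lu+hw)/4))^2)
         + max ((lu-b + 2*(129/200)*((a-2*hu+lw)/4))^2) ((hu-a + 2*(129/200)*((b-2*lu+hw)/4))^2) \<le> 1"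
  shows "F_TP1 s \<le> 1 \<and> F_TP2 s \<le> 1"
proof -
  define u where "u = sqrt (1 - 1/4 * s^2)"
  have "s^2 \<le> b^2" using s by (intro power_mono) auto
  then have "lu^2 \<le> 1 - 1/4 * s^2" using u(2) by linarith
  moreover have "a^2 \<le> s^2" using s by (intro power_mono) auto
  then have "1 - 1/4*s^2 \<le> hu^2" using u(3) by linarith
  ultimately have ub: "lu \<le> u" "u \<le> hu" using sqrt_bnd[OF u(1) _ _ hu0] unfolding u_def by auto
  have u0: "0 \<le> u" using ub u by linarith
  have "s^2 \<le> (10669/10000)^2" using s s1_star_le by (intro power_mono) auto
  then have "0 \<le> 1 - 1/4*s^2" by (simp add: power2_eq_square)
  then have usq: "u^2 = 1 - 1/4*s^2" unfolding u_def by simp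
  define d where "d = 3*s - 2*u"
  have "(2*u)^2 \<le> (3*s)^2" using usq s(4) by (simp add: power_mult_distrib)
  moreover have "0 \<le> 3*s" using s by linarith
  ultimately have "2*u \<le> 3*s" by (rule power2_le_imp_le)
  then have d0: "0 \<le> d" unfolding d_def by simp
  have dh: "d \<le> 3*b-2*lu" unfolding d_def using ub s by linarith
  have dl: "max (3*a-2*hu) 0 \<le> d" using ub s d0 unfolding d_def by linarith
  have "d^2 \<le> (3*b-2*lu)^2" using power_mono[OF dh d0, of 2] .
  moreover have "(max (3*a-2*hu) 0)^2 \<le> d^2" using power_mono[OF dl, of 2] by simp
  ultimately have wb: "lw \<le> sqrt (8 - d^2)" "sqrt (8 - d^2) \<le> hw"
    using sqrt_bnd[OF w(1) _ _ w(4), of "8 - d^2"] w by linarith+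
  have Tinv: "Tinv s = u - s" unfolding Tinv_def u_def by simp
  have sig: "sigma s = (s - 2*u + sqrt (8 - d^2))/4"
  proof -
    have "s - 2 * Tinv s = d" unfolding Tinv d_def by simp
    then have "sigma s = 1/4 * (- s - 2 * Tinv s + sqrt (8 - d^2))" unfolding sigma_def using s(3) by simp
    then show ?thesis using Tinv by simp
  qed
  define sg where "sg = sigma s"
  have sgl: "(a-2*hu+lw)/4 \<le> sg" unfolding sg_def sig using s ub wb by (intro divide_right_mono) linarith+
  have sgh: "sg \<le> (b-2*lu+hw)/4" unfolding sg_def sig using s ub wb by (intro divide_right_mono) linarith+
  have sg0: "0 \<le> sg" using sgl sl by linarith
  define r :: real where "r = 1 / (2 * sqrt 2)"
  have rb: "(35355/100000) \<le> r" "r \<le> (35356/100000)" unfolding r_def using r_bnd by auto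
  have sgr: "sg / (2 * sqrt 2) = sg * r" unfolding r_def by simp
  have p1: "(a-2*hu+lw)/4*(35355/100000) \<le> sg * r" using sgl rb sl by (intro mult_mono) linarith+
  have p2: "sg * r \<le> (b-2*lu+hw)/4*(35356/100000)" using sgh rb sg0 by (intro mult_mono) linarith+
  have x1: "xp1 s = s/2 + sg*r" unfolding xp1_def sg_def[symmetric] sgr by simp
  have y1: "yp1 s = u - s + sg + sg*r" unfolding yp1_def sg_def[symmetric] sgr using s(3) Tinv by simp
  have x2: "xp2 s = s/2 + 129/200*sg" unfolding xp2_def sg_def by simp
  have y2: "yp2 s = u - s + 2*(129/200)*sg" unfolding yp2_def sg_def[symmetric] using s(3) Tinv by simp
  have f1: "F_TP1 s \<le> max ((a/2 + (a-2*hu+lw)/4*(35355/100000))^2) ((b/2 + (b-2*lu+hw)/4*(35356/100000))^2)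
         + max ((lu-b + (a-2*hu+lw)/4 + (a-2*hu+lw)/4*(35355/100000))^2) ((hu-a + (b-2*lu+hw)/4 + (b-2*lu+hw)/4*(35356/100000))^2)"
    unfolding F_TP1_def x1 y1
  proof (rule add_mono)
    show "(s / 2 + sg * r)\<^sup>2 \<le> max ((a/2 + (a-2*hu+lw)/4*(35355/100000))^2) ((b/2 + (b-2*lu+hw)/4*(35356/100000))^2)"
      by (rule sq_le_max) (use s p1 p2 in linarith)+
    show "(u - s + sg + sg * r)\<^sup>2 \<le> max ((lu-b + (a-2*hu+lw)/4 + (a-2*hu+lw)/4*(35355/100000))^2) ((hu-a + (b-2*lu+hw)/4 + (b-2*lu+hw)/4*(35356/100000))^2)"
      by (rule sq_le_max) (use s ub sgl sgh p1 p2 in linarith)+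
  qed
  have f2: "F_TP2 s \<le> max ((a/2 + (129/200)*((a-2*hu+lw)/4))^2) ((b/2 + (129/200)*((b-2*lu+hw)/4))^2)
         + max ((lu-b + 2*(129/200)*((a-2*hu+lw)/4))^2) ((hu-a + 2*(129/200)*((b-2*lu+hw)/4))^2)"
    unfolding F_TP2_def x2 y2
  proof (rule add_mono)
    show "(s / 2 + (129/200) * sg)\<^sup>2 \<le> max ((a/2 + (129/200)*((a-2*hu+lw)/4))^2) ((b/2 + (129/200)*((b-2*lu+hw)/4))^2)"
      by (rule sq_le_max) (use s sgl sgh in linarith)+
    show "(u - s + 2 * (129/200) * sg)\<^sup>2 \<le> max ((lu-b + 2*(129/200)*((a-2*hu+lw)/4))^2) ((hu-a + 2*(129/200)*((b-2*lu+hw)/4))^2)"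
      by (rule sq_le_max) (use s ub sgl sgh in linarith)+
  qed
  show ?thesis using order_trans[OF f1 c1] order_trans[OF f2 c2] by simp
qed

lemma br2:
  fixes s a b lv hv :: real
  assumes s: "a \<le> s" "s \<le> b" "\<not> s \<le> s1_star" "0 \<le> a"
  and v: "0 \<le> lv" "lv^2 \<le> 20 - b^2" "20 - a^2 \<le> hv^2" "0 \<le> hv"
  and sl: "0 \<le> (lv-2*b)/5"
  and c1: "max ((a/2 + (lv-2*b)/5*(35355/100000))^2) ((b/2 + (hv-2*a)/5*(35356/100000))^2)
         + max (((lv-2*b)/5/2 + (lv-2*b)/5*(35355/100000))^2) (((hv-2*a)/5/2 + (hv-2*a)/5*(35356/100000))^2) \<le> 1"
  and c2: "max ((a/2 + (129/200)*((lv-2*b)/5))^2) ((b/2 + (129/200)*((hv-2*a)/5))^2)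
         + max ((-((hv-2*a)/5)/2 + 2*(129/200)*((lv-2*b)/5))^2) ((-((lv-2*b)/5)/2 + 2*(129/200)*((hv-2*a)/5))^2) \<le> 1"
  shows "F_TP1 s \<le> 1 \<and> F_TP2 s \<le> 1"
proof -
  define v where "v = sqrt (20 - s^2)"
  have "s^2 \<le> b^2" using s by (intro power_mono) auto
  then have "lv^2 \<le> 20 - s^2" using v(2) by linarith
  moreover have "a^2 \<le> s^2" using s by (intro power_mono) auto
  then have "20 - s^2 \<le> hv^2" using v(3) by linarith
  ultimately have vb: "lv \<le> v" "v \<le> hv" using sqrt_bnd[OF v(1) _ _ v(4)] unfolding v_def by auto
  have sig: "sigma s = (v - 2*s)/5" unfolding sigma_def v_def using s(3) by simp
  define sg where "sg = sigma s"
  have sgl: "(lv-2*b)/5 \<le> sg" unfolding sg_def sig using s vb by (intro divide_right_mono) linarith+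
  have sgh: "sg \<le> (hv-2*a)/5" unfolding sg_def sig using s vb by (intro divide_right_mono) linarith+
  have sg0: "0 \<le> sg" using sgl sl by linarith
  define r :: real where "r = 1 / (2 * sqrt 2)"
  have rb: "35355/100000 \<le> r" "r \<le> 35356/100000" unfolding r_def using r_bnd by auto
  have sgr: "sg / (2 * sqrt 2) = sg * r" unfolding r_def by simp
  have p1: "(lv-2*b)/5*(35355/100000) \<le> sg * r" using sgl rb sl by (intro mult_mono) linarith+
  have p2: "sg * r \<le> (hv-2*a)/5*(35356/100000)" using sgh rb sg0 by (intro mult_mono) linarith+
  have x1: "xp1 s = s/2 + sg*r" unfolding xp1_def sg_def[symmetric] sgr by simp
  have y1: "yp1 s = sg/2 + sg*r" unfolding yp1_def sg_def[symmetric] sgr using s(3) by simp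
  have x2: "xp2 s = s/2 + 129/200*sg" unfolding xp2_def sg_def by simp
  have y2: "yp2 s = - sg/2 + 2*(129/200)*sg" unfolding yp2_def sg_def[symmetric] using s(3) by simp
  have f1: "F_TP1 s \<le> max ((a/2 + (lv-2*b)/5*(35355/100000))^2) ((b/2 + (hv-2*a)/5*(35356/100000))^2)
         + max (((lv-2*b)/5/2 + (lv-2*b)/5*(35355/100000))^2) (((hv-2*a)/5/2 + (hv-2*a)/5*(35356/100000))^2)"
    unfolding F_TP1_def x1 y1
  proof (rule add_mono)
    show "(s / 2 + sg * r)\<^sup>2 \<le> max ((a/2 + (lv-2*b)/5*(35355/100000))^2) ((b/2 + (hv-2*a)/5*(35356/100000))^2)"
      by (rule sq_le_max) (use s p1 p2 in linarith)+
    show "(sg/2 + sg * r)\<^sup>2 \<le> max (((lv-2*b)/5/2 + (lv-2*b)/5*(35355/100000))^2) (((hv-2*a)/5/2 + (hv-2*a)/5*(35356/100000))^2)"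
      by (rule sq_le_max) (use sgl sgh p1 p2 in linarith)+
  qed
  have f2: "F_TP2 s \<le> max ((a/2 + (129/200)*((lv-2*b)/5))^2) ((b/2 + (129/200)*((hv-2*a)/5))^2)
         + max ((-((hv-2*a)/5)/2 + 2*(129/200)*((lv-2*b)/5))^2) ((-((lv-2*b)/5)/2 + 2*(129/200)*((hv-2*a)/5))^2)"
    unfolding F_TP2_def x2 y2
  proof (rule add_mono)
    show "(s / 2 + 129/200 * sg)\<^sup>2 \<le> max ((a/2 + (129/200)*((lv-2*b)/5))^2) ((b/2 + (129/200)*((hv-2*a)/5))^2)"
      by (rule sq_le_max) (use s sgl sgh in linarith)+
    show "(- sg/2 + 2*(129/200) * sg)\<^sup>2 \<le> max ((-((hv-2*a)/5)/2 + 2*(129/200)*((lv-2*b)/5))^2) ((-((lv-2*b)/5)/2 + 2*(129/200)*((hv-2*a)/5))^2)"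
      by (rule sq_le_max) (use sgl sgh in linarith)+
  qed
  show ?thesis using order_trans[OF f1 c1] order_trans[OF f2 c2] by simp
qed

lemma ell_bound:
  fixes s :: real
  assumes "0 < s" "ell1 s \<le> s"
  shows "2/5 \<le> s^2"
proof (rule ccontr)
  assume "\<not> 2/5 \<le> s^2"
  then have s2: "s^2 < 2/5" by simp
  define u where "u = sqrt (1 - 1/4 * s^2)"
  have "0 \<le> 1 - 1/4 * s^2" using s2 by simp
  then have usq: "u^2 = 1 - 1/4 * s^2" unfolding u_def by simp
  have u0: "0 \<le> u" unfolding u_def using \<open>0 \<le> 1 - 1/4 * s^2\<close> by simp
  have e1: "(3*s)^2 = 9*s^2" by (simp add: power_mult_distrib)
  have e2: "(2*u)^2 = 4*u^2" by (simp add: power_mult_distrib)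
  have "(3*s)^2 < (2*u)^2" unfolding e1 e2 using usq s2 by linarith
  moreover have "0 \<le> 2*u" using u0 by simp
  ultimately have "3*s < 2*u" by (rule power2_less_imp_less)
  then have "0 < 2*u - 3*s" by simp
  then have "0 < s * (2*u - 3*s)" using assms(1) by (rule mult_pos_pos[rotated])
  moreover have e3: "s * (2*u - 3*s) = 2*(u*s) - 3*s^2" by (simp add: algebra_simps power2_eq_square)
  ultimately have pos: "0 < 2*(u*s) - 3*s^2" by linarith
  have Tinv: "Tinv s = u - s" unfolding Tinv_def u_def by simp
  have e4: "(Tinv s)^2 = u^2 - 2*(u*s) + s^2" unfolding Tinv by (simp add: power2_diff)
  have e5: "(3/2*s)^2 = 9/4*s^2" by (simp add: power_mult_distrib power_divide)
  have "(3/2*s)^2 < 1 - (Tinv s)^2" unfolding e4 e5 using usq pos by linarith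
  then have "3/2*s < sqrt (1 - (Tinv s)^2)" by (rule real_less_rsqrt)
  then have "s < ell1 s" unfolding ell1_def by simp
  then show False using assms(2) by simp
qed

lemma I1_0: "1581/2500 \<le> s \<Longrightarrow> s \<le> 6341/10000 \<Longrightarrow> s \<le> s1_star \<Longrightarrow> 2/5 \<le> s^2 \<Longrightarrow> F_TP1 s \<le> 1 \<and> F_TP2 s \<le> 1"
  by (rule br1[where a="1581/2500" and b="6341/10000" and lu="118551/125000" and hu="948693/1000000" and lw="2828421/1000000" and hw="707107/250000"]) (simp_all add: power_divide)

lemma I1_1: "6341/10000 \<le> s \<Longrightarrow> s \<le> 3179/5000 \<Longrightarrow> s \<le> s1_star \<Longrightarrow> 2/5 \<le> s^2 \<Longrightarrow> F_TP1 s \<le> 1 \<and> F_TP2 s \<le> 1"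
  by (rule br1[where a="6341/10000" and b="3179/5000" and lu="237031/250000" and hu="948409/1000000" and lw="565681/200000" and hw="1414211/500000"]) (simp_all add: power_divide)

lemma I1_2: "3179/5000 \<le> s \<Longrightarrow> s \<le> 51/80 \<Longrightarrow> s \<le> s1_star \<Longrightarrow> 2/5 \<le> s^2 \<Longrightarrow> F_TP1 s \<le> 1 \<and> F_TP2 s \<le> 1"
  by (rule br1[where a="3179/5000" and b="51/80" and lu="473919/500000" and hu="1517/1600" and lw="2828377/1000000" and hw="1414203/500000"]) (simp_all add: power_divide)

lemma I1_3: "51/80 \<le> s \<Longrightarrow> s \<le> 63919/100000 \<Longrightarrow> s \<le> s1_star \<Longrightarrow> 2/5 \<le> s^2 \<Longrightarrow> F_TP1 s \<le> 1 \<and> F_TP2 s \<le> 1"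
  by (rule br1[where a="51/80" and b="63919/100000" and lu="473777/500000" and hu="947839/1000000" and lw="2828337/1000000" and hw="1414189/500000"]) (simp_all add: power_divide)

lemma I1_4: "63919/100000 \<le> s \<Longrightarrow> s \<le> 32129/50000 \<Longrightarrow> s \<le> s1_star \<Longrightarrow> 2/5 \<le> s^2 \<Longrightarrow> F_TP1 s \<le> 1 \<and> F_TP2 s \<le> 1"
  by (rule br1[where a="63919/100000" and b="32129/50000" and lu="47349/50000" and hu="189511/200000" and lw="113129/40000" and hw="1414169/500000"]) (simp_all add: power_divide)

lemma I1_5: "32129/50000 \<le> s \<Longrightarrow> s \<le> 32299/50000 \<Longrightarrow> s \<le> s1_star \<Longrightarrow> 2/5 \<le> s^2 \<Longrightarrow> F_TP1 s \<le> 1 \<and> F_TP2 s \<le> 1"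
  by (rule br1[where a="32129/50000" and b="32299/50000" and lu="473201/500000" and hu="946981/1000000" and lw="1414033/500000" and hw="1414113/500000"]) (simp_all add: power_divide)

lemma I1_6: "32299/50000 \<le> s \<Longrightarrow> s \<le> 32469/50000 \<Longrightarrow> s \<le> s1_star \<Longrightarrow> 2/5 \<le> s^2 \<Longrightarrow> F_TP1 s \<le> 1 \<and> F_TP2 s \<le> 1"
  by (rule br1[where a="32299/50000" and b="32469/50000" and lu="47291/50000" and hu="946403/1000000" and lw="1413931/500000" and hw="2828067/1000000"]) (simp_all add: power_divide)

lemma I1_7: "32469/50000 \<le> s \<Longrightarrow> s \<le> 65277/100000 \<Longrightarrow> s \<le> s1_star \<Longrightarrow> 2/5 \<le> s^2 \<Longrightarrow> F_TP1 s \<le> 1 \<and> F_TP2 s \<le> 1"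
  by (rule br1[where a="32469/50000" and b="65277/100000" and lu="236309/250000" and hu="945821/1000000" and lw="2827613/1000000" and hw="2827863/1000000"]) (simp_all add: power_divide)

lemma I1_8: "65277/100000 \<le> s \<Longrightarrow> s \<le> 16489/25000 \<Longrightarrow> s \<le> s1_star \<Longrightarrow> 2/5 \<le> s^2 \<Longrightarrow> F_TP1 s \<le> 1 \<and> F_TP2 s \<le> 1"
  by (rule br1[where a="65277/100000" and b="16489/25000" and lu="944057/1000000" and hu="945237/1000000" and lw="88343/31250" and hw="1413807/500000"]) (simp_all add: power_divide)

lemma I1_9: "16489/25000 \<le> s \<Longrightarrow> s \<le> 13327/20000 \<Longrightarrow> s \<le> s1_star \<Longrightarrow> 2/5 \<le> s^2 \<Longrightarrow> F_TP1 s \<le> 1 \<and> F_TP2 s \<le> 1"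
  by (rule br1[where a="16489/25000" and b="13327/20000" and lu="188573/200000" and hu="472029/500000" and lw="706539/250000" and hw="2826977/1000000"]) (simp_all add: power_divide)

lemma I1_10: "13327/20000 \<le> s \<Longrightarrow> s \<le> 33657/50000 \<Longrightarrow> s \<le> s1_star \<Longrightarrow> 2/5 \<le> s^2 \<Longrightarrow> F_TP1 s \<le> 1 \<and> F_TP2 s \<le> 1"
  by (rule br1[where a="13327/20000" and b="33657/50000" and lu="470829/500000" and hu="471433/500000" and lw="56503/20000" and hw="2826157/1000000"]) (simp_all add: power_divide)

lemma I1_11: "33657/50000 \<le> s \<Longrightarrow> s \<le> 8499/12500 \<Longrightarrow> s \<le> s1_star \<Longrightarrow> 2/5 \<le> s^2 \<Longrightarrow> F_TP1 s \<le> 1 \<and> F_TP2 s \<le> 1"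
  by (rule br1[where a="33657/50000" and b="8499/12500" and lu="940439/1000000" and hu="941659/1000000" and lw="2823961/1000000" and hw="2825151/1000000"]) (simp_all add: power_divide)

lemma I1_12: "8499/12500 \<le> s \<Longrightarrow> s \<le> 68671/100000 \<Longrightarrow> s \<le> s1_star \<Longrightarrow> 2/5 \<le> s^2 \<Longrightarrow> F_TP1 s \<le> 1 \<and> F_TP2 s \<le> 1"
  by (rule br1[where a="8499/12500" and b="68671/100000" and lu="187841/200000" and hu="23511/25000" and lw="2822583/1000000" and hw="1411981/500000"]) (simp_all add: power_divide)

lemma I1_13: "68671/100000 \<le> s \<Longrightarrow> s \<le> 17507/25000 \<Longrightarrow> s \<le> s1_star \<Longrightarrow> 2/5 \<le> s^2 \<Longrightarrow> F_TP1 s \<le> 1 \<and> F_TP2 s \<le> 1"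
  by (rule br1[where a="68671/100000" and b="17507/25000" and lu="936697/1000000" and hu="469603/500000" and lw="2819267/1000000" and hw="352823/125000"]) (simp_all add: power_divide)

lemma I1_14: "17507/25000 \<le> s \<Longrightarrow> s \<le> 35693/50000 \<Longrightarrow> s \<le> s1_star \<Longrightarrow> 2/5 \<le> s^2 \<Longrightarrow> F_TP1 s \<le> 1 \<and> F_TP2 s \<le> 1"
  by (rule br1[where a="17507/25000" and b="35693/50000" and lu="934131/1000000" and hu="468349/500000" and lw="281519/100000" and hw="704817/250000"]) (simp_all add: power_divide)

lemma I1_15: "35693/50000 \<le> s \<Longrightarrow> s \<le> 9093/12500 \<Longrightarrow> s \<le> s1_star \<Longrightarrow> 2/5 \<le> s^2 \<Longrightarrow> F_TP1 s \<le> 1 \<and> F_TP2 s \<le> 1"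
  by (rule br1[where a="35693/50000" and b="9093/12500" and lu="232877/250000" and hu="233533/250000" and lw="1405173/500000" and hw="2815191/1000000"]) (simp_all add: power_divide)

lemma I1_16: "9093/12500 \<le> s \<Longrightarrow> s \<le> 37051/50000 \<Longrightarrow> s \<le> s1_star \<Longrightarrow> 2/5 \<le> s^2 \<Longrightarrow> F_TP1 s \<le> 1 \<and> F_TP2 s \<le> 1"
  by (rule br1[where a="9093/12500" and b="37051/50000" and lu="232207/250000" and hu="931509/1000000" and lw="701181/250000" and hw="2810347/1000000"]) (simp_all add: power_divide)

lemma I1_17: "37051/50000 \<le> s \<Longrightarrow> s \<le> 38409/50000 \<Longrightarrow> s \<le> s1_star \<Longrightarrow> 2/5 \<le> s^2 \<Longrightarrow> F_TP1 s \<le> 1 \<and> F_TP2 s \<le> 1"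
  by (rule br1[where a="37051/50000" and b="38409/50000" and lu="184659/200000" and hu="928829/1000000" and lw="2791107/1000000" and hw="112189/40000"]) (simp_all add: power_divide)

lemma I1_18: "38409/50000 \<le> s \<Longrightarrow> s \<le> 39767/50000 \<Longrightarrow> s \<le> s1_star \<Longrightarrow> 2/5 \<le> s^2 \<Longrightarrow> F_TP1 s \<le> 1 \<and> F_TP2 s \<le> 1"
  by (rule br1[where a="38409/50000" and b="39767/50000" and lu="114691/125000" and hu="28853/31250" and lw="554849/200000" and hw="697777/250000"]) (simp_all add: power_divide)

lemma I1_19: "39767/50000 \<le> s \<Longrightarrow> s \<le> 329/400 \<Longrightarrow> s \<le> s1_star \<Longrightarrow> 2/5 \<le> s^2 \<Longrightarrow> F_TP1 s \<le> 1 \<and> F_TP2 s \<le> 1"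
  by (rule br1[where a="39767/50000" and b="329/400" and lu="455761/500000" and hu="917529/1000000" and lw="2754029/1000000" and hw="2774247/1000000"]) (simp_all add: power_divide)

lemma I1_20: "329/400 \<le> s \<Longrightarrow> s \<le> 16993/20000 \<Longrightarrow> s \<le> s1_star \<Longrightarrow> 2/5 \<le> s^2 \<Longrightarrow> F_TP1 s \<le> 1 \<and> F_TP2 s \<le> 1"
  by (rule br1[where a="329/400" and b="16993/20000" and lu="36211/40000" and hu="911523/1000000" and lw="2730341/1000000" and hw="275403/100000"]) (simp_all add: power_divide)

lemma I1_21: "16993/20000 \<le> s \<Longrightarrow> s \<le> 22599/25000 \<Longrightarrow> s \<le> s1_star \<Longrightarrow> 2/5 \<le> s^2 \<Longrightarrow> F_TP1 s \<le> 1 \<and> F_TP2 s \<le> 1"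
  by (rule br1[where a="16993/20000" and b="22599/25000" and lu="223007/250000" and hu="226319/250000" and lw="2671917/1000000" and hw="2730343/1000000"]) (simp_all add: power_divide)

lemma I1_22: "22599/25000 \<le> s \<Longrightarrow> s \<le> 23957/25000 \<Longrightarrow> s \<le> s1_star \<Longrightarrow> 2/5 \<le> s^2 \<Longrightarrow> F_TP1 s \<le> 1 \<and> F_TP2 s \<le> 1"
  by (rule br1[where a="22599/25000" and b="23957/25000" and lu="438869/500000" and hu="892029/1000000" and lw="2597503/1000000" and hw="2671919/1000000"]) (simp_all add: power_divide)

lemma I1_23: "23957/25000 \<le> s \<Longrightarrow> s \<le> 101259/100000 \<Longrightarrow> s \<le> s1_star \<Longrightarrow> 2/5 \<le> s^2 \<Longrightarrow> F_TP1 s \<le> 1 \<and> F_TP2 s \<le> 1"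
  by (rule br1[where a="23957/25000" and b="101259/100000" and lu="21559/25000" and hu="877739/1000000" and lw="1252587/500000" and hw="519501/200000"]) (simp_all add: power_divide)

lemma I1_24: "101259/100000 \<le> s \<Longrightarrow> s \<le> 10669/10000 \<Longrightarrow> s \<le> s1_star \<Longrightarrow> 2/5 \<le> s^2 \<Longrightarrow> F_TP1 s \<le> 1 \<and> F_TP2 s \<le> 1"
  by (rule br1[where a="101259/100000" and b="10669/10000" and lu="845831/1000000" and hu="862361/1000000" and lw="1196119/500000" and hw="313147/125000"]) (simp_all add: power_divide)

lemma I2_0: "2667/2500 \<le> s \<Longrightarrow> s \<le> 253/200 \<Longrightarrow> \<not> s \<le> s1_star \<Longrightarrow> F_TP1 s \<le> 1 \<and> F_TP2 s \<le> 1"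
  by (rule br2[where a="2667/2500" and b="253/200" and lv="857899/200000" and hv="2171517/500000"]) (simp_all add: power_divide)

theorem lemma6:
  fixes s1 :: real
  assumes "0.295 \<le> s1" and "s1 \<le> sqrt (8/5)" and "ell1 s1 \<le> s1"
  shows "F_TP1 s1 \<le> 1 \<and> F_TP2 s1 \<le> 1"
proof -
  define s where "s = s1"
  have s0: "0 < s" using assms(1) unfolding s_def by simp
  have s2: "2/5 \<le> s^2" using ell_bound[OF s0] assms(3) unfolding s_def by simp
  have "sqrt (8/5) \<le> (12650/10000::real)"
    by (rule real_le_lsqrt) (simp_all add: power_divide)
  then have hi0: "s \<le> 12650/10000" using assms(2) unfolding s_def by linarith
  have lo0: "6324/10000 \<le> s"
  proof (rule ccontr)
    assume "\<not> 6324/10000 \<le> s"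
    then have "s < 6324/10000" by simp
    then have "s^2 < (6324/10000)^2" using s0 by (intro power_strict_mono) auto
    then show False using s2 by (simp add: power_divide)
  qed
  have "F_TP1 s \<le> 1 \<and> F_TP2 s \<le> 1"
  proof (cases "s \<le> s1_star")
    case c: True
    have hi: "s \<le> 10669/10000" using c s1_star_le by linarith
    have lo: "1581/2500 \<le> s" using lo0 by simp
    show ?thesis
    proof (cases "s \<le> 6341/10000")
      case True
      show ?thesis using I1_0[OF lo True c s2] .
    next
      case False
      then have lo: "6341/10000 \<le> s" by simp
      show ?thesis
      proof (cases "s \<le> 3179/5000")
        case True
        show ?thesis using I1_1[OF lo True c s2] .
      next
        case False
        then have lo: "3179/5000 \<le> s" by simp
        show ?thesis
        proof (cases "s \<le> 51/80")
          case True
          show ?thesis using I1_2[OF lo True c s2] .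
        next
          case False
          then have lo: "51/80 \<le> s" by simp
          show ?thesis
          proof (cases "s \<le> 63919/100000")
            case True
            show ?thesis using I1_3[OF lo True c s2] .
          next
            case False
            then have lo: "63919/100000 \<le> s" by simp
            show ?thesis
            proof (cases "s \<le> 32129/50000")
              case True
              show ?thesis using I1_4[OF lo True c s2] .
            next
              case False
              then have lo: "32129/50000 \<le> s" by simp
              show ?thesis
              proof (cases "s \<le> 32299/50000")
                case True
                show ?thesis using I1_5[OF lo True c s2] .
              next
                case False
                then have lo: "32299/50000 \<le> s" by simp
                show ?thesis
                proof (cases "s \<le> 32469/50000")
                  case True
                  show ?thesis using I1_6[OF lo True c s2] .
                next
                  case False
                  then have lo: "32469/50000 \<le> s" by simp
                  show ?thesis
                  proof (cases "s \<le> 65277/100000")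
                    case True
                    show ?thesis using I1_7[OF lo True c s2] .
                  next
                    case False
                    then have lo: "65277/100000 \<le> s" by simp
                    show ?thesis
                    proof (cases "s \<le> 16489/25000")
                      case True
                      show ?thesis using I1_8[OF lo True c s2] .
                    next
                      case False
                      then have lo: "16489/25000 \<le> s" by simp
                      show ?thesis
                      proof (cases "s \<le> 13327/20000")
                        case True
                        show ?thesis using I1_9[OF lo True c s2] .
                      next
                        case False
                        then have lo: "13327/20000 \<le> s" by simp
                        show ?thesis
                        proof (cases "s \<le> 33657/50000")
                          case True
                          show ?thesis using I1_10[OF lo True c s2] .
                        next
                          case False
                          then have lo: "33657/50000 \<le> s" by simp
                          show ?thesis
                          proof (cases "s \<le> 8499/12500")
                            case True
                            show ?thesis using I1_11[OF lo True c s2] .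
                          next
                            case False
                            then have lo: "8499/12500 \<le> s" by simp
                            show ?thesis
                            proof (cases "s \<le> 68671/100000")
                              case True
                              show ?thesis using I1_12[OF lo True c s2] .
                            next
                              case False
                              then have lo: "68671/100000 \<le> s" by simp
                              show ?thesis
                              proof (cases "s \<le> 17507/25000")
                                case True
                                show ?thesis using I1_13[OF lo True c s2] .
                              next
                                case False
                                then have lo: "17507/25000 \<le> s" by simp
                                show ?thesis
                                proof (cases "s \<le> 35693/50000")
                                  case True
                                  show ?thesis using I1_14[OF lo True c s2] .
                                next
                                  case False
                                  then have lo: "35693/50000 \<le> s" by simp
                                  show ?thesis
                                  proof (cases "s \<le> 9093/12500")
                                    case True
                                    show ?thesis using I1_15[OF lo True c s2] .
                                  next
                                    case False
                                    then have lo: "9093/12500 \<le> s" by simp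
                                    show ?thesis
                                    proof (cases "s \<le> 37051/50000")
                                      case True
                                      show ?thesis using I1_16[OF lo True c s2] .
                                    next
                                      case False
                                      then have lo: "37051/50000 \<le> s" by simp
                                      show ?thesis
                                      proof (cases "s \<le> 38409/50000")
                                        case True
                                        show ?thesis using I1_17[OF lo True c s2] .
                                      next
                                        case False
                                        then have lo: "38409/50000 \<le> s" by simp
                                        show ?thesis
                                        proof (cases "s \<le> 39767/50000")
                                          case True
                                          show ?thesis using I1_18[OF lo True c s2] .
                                        next
                                          case False
                                          then have lo: "39767/50000 \<le> s" by simp
                                          show ?thesis
                                          proof (cases "s \<le> 329/400")
                                            case True
                                            show ?thesis using I1_19[OF lo True c s2] .
                                          next
                                            case False
                                            then have lo: "329/400 \<le> s" by simp
                                            show ?thesis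
                                            proof (cases "s \<le> 16993/20000")
                                              case True
                                              show ?thesis using I1_20[OF lo True c s2] .
                                            next
                                              case False
                                              then have lo: "16993/20000 \<le> s" by simp
                                              show ?thesis
                                              proof (cases "s \<le> 22599/25000")
                                                case True
                                                show ?thesis using I1_21[OF lo True c s2] .
                                              next
                                                case False
                                                then have lo: "22599/25000 \<le> s" by simp
                                                show ?thesis
                                                proof (cases "s \<le> 23957/25000")
                                                  case True
                                                  show ?thesis using I1_22[OF lo True c s2] .
                                                next
                                                  case False
                                                  then have lo: "23957/25000 \<le> s" by simp
                                                  show ?thesis
                                                  proof (cases "s \<le> 101259/100000")
                                                    case True
                                                    show ?thesis using I1_23[OF lo True c s2] .
                                                  next
                                                    case False
                                                    then have lo: "101259/100000 \<le> s" by simp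
                                                    show ?thesis using I1_24[OF lo hi c s2] .
                                                  qed
                                                qed
                                              qed
                                            qed
                                          qed
                                        qed
                                      qed
                                    qed
                                  qed
                                qed
                              qed
                            qed
                          qed
                        qed
                      qed
                    qed
                  qed
                qed
              qed
            qed
          qed
        qed
      qed
    qed
  next
    case c: False
    have lo: "2667/2500 \<le> s" using c s1_star_ge by linarith
    have hi: "s \<le> 253/200" using hi0 by simp
    show ?thesis using I2_0[OF lo hi c] .
  qed
  then show ?thesis unfolding s_def .
qed

end
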